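(* Let $\phi\in\mathrm{LTL}[\mathsf{X},\mathsf{wX},\mathsf{F},\mathsf{G}]$ and $k\in\mathbb N$. Suppose there are $A,B\subseteq\Sigma^+$ such that $\phi$ separates $A$ from $B$, and every deduction tree of $\langle A,B\rangle$ has size at least $k$. Then $\mathrm{size}(\phi)\ge k$.
   Context: Let $AP$ be a finite set of atomic propositions and $\Sigma=2^{AP}$. Formulae of $\mathrm{LTL}[\mathsf{X},\mathsf{wX},\mathsf{F},\mathsf{G}]$ are generated by $\phi::=p\mid\neg p\mid\phi\lor\phi\mid\phi\land\phi\mid\mathsf{X}\phi\mid\mathsf{wX}\phi\mid\mathsf{F}\phi\mid\mathsf{G}\phi$ ($p\in AP$), interpreted on $\sigma\in\Sigma^+$ at positions $0\le i<|\sigma|$: literals/Booleans as usual; $\mathsf{X}\phi$: $i+1<|\sigma|$ and $\phi$ at $i+1$; $\mathsf{wX}\phi$: $i+1=|\sigma|$ or $\phi$ at $i+1$; $\mathsf{F}\phi$/$\mathsf{G}\phi$: $\phi$ at some/every $j$ with $i\le j<|\sigma|$. Size: literals 1, unary operators add 1, binary connectives sum sizes plus 1. For $C\subseteq\Sigma^+$, $C\models\phi$ means $\sigma,0\models\phi$ for all $\sigma\in C$ and $C\perp\phi$ means $\sigma,0\not\models\phi$ for all $\sigma\in C$; $\phi$ separates $A$ from $B$ if $A\models\phi$ and $B\perp\phi$. Notation: $\sigma^{(j)}$ is the suffix of $\sigma$ starting at position $j$; $A^{\mathsf X}=\{\sigma^{(1)}:\sigma\in A,|\sigma|\ge2\}$;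 $A^{\mathsf G}=\{\sigma^{(j)}:\sigma\in A,0\le j<|\sigma|\}$; a future point for $A$ is $f:A\to\mathbb N$ with $f(\sigma)<|\sigma|$, and $A^f=\{\sigma^{(f(\sigma))}:\sigma\in A\}$. Proof system on terms $\langle A,B\rangle$ ($A,B\subseteq\Sigma^+$) with rules: Atomic: $\langle A,B\rangle$ if $A\models\alpha$, $B\perp\alpha$ for a literal $\alpha$; Or: $\langle A_1\uplus A_2,B\rangle$ from $\langle A_1,B\rangle,\langle A_2,B\rangle$; And: $\langle A,B_1\uplus B_2\rangle$ from $\langle A,B_1\rangle,\langle A,B_2\rangle$; Next: $\langle A,B\rangle$ from $\langle A^{\mathsf X},B^{\mathsf X}\rangle$ if $|A^{\mathsf X}|=|A|$; WeakNext: $\langle A,B\rangle$ from $\langle A^{\mathsf X},B^{\mathsf X}\rangle$ if $|B^{\mathsf X}|=|B|$; Future: $\langle A,B\rangle$ from $\langle A^f,B^{\mathsf G}\rangle$, $f$ a future point for $A$; Globally: $\langle A,B\rangle$ from $\langle A^{\mathsf G},B^f\rangle$, $f$ a future point for $B$ ($\uplus$ is disjoint union). A deduction tree for $\langle A,B\rangle$ is a finite tree of rule applications rooted at $\langle A,B\rangle$ in which every hypothesis is itself derived; its size is the number of rule applications. *)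

theory Defs
  imports Main
begin

(* Atomic propositions: a finite type 'ap (AP finite); letters Sigma = 'ap set;
   finite words = 'ap set list, Sigma^+ = nonempty lists. *)

datatype 'ap ltl =
    Prop 'ap
  | NProp 'ap
  | Or "'ap ltl" "'ap ltl"
  | And "'ap ltl" "'ap ltl"
  | Next "'ap ltl"
  | WNext "'ap ltl"
  | Fut "'ap ltl"
  | Glob "'ap ltl"

fun sat :: "'ap set list \<Rightarrow> nat \<Rightarrow> 'ap ltl \<Rightarrow> bool" where
  "sat \<sigma> i (Prop p) = (p \<in> \<sigma> ! i)"
| "sat \<sigma> i (NProp p) = (p \<notin> \<sigma> ! i)"
| "sat \<sigma> i (Or \<phi> \<psi>) = (sat \<sigma> i \<phi> \<or> sat \<sigma> i \<psi>)"
| "sat \<sigma> i (And \<phi> \<psi>) = (sat \<sigma> i \<phi> \<and> sat \<sigma> i \<psi>)"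
| "sat \<sigma> i (Next \<phi>) = (i + 1 < length \<sigma> \<and> sat \<sigma> (i + 1) \<phi>)"
| "sat \<sigma> i (WNext \<phi>) = (i + 1 = length \<sigma> \<or> sat \<sigma> (i + 1) \<phi>)"
| "sat \<sigma> i (Fut \<phi>) = (\<exists>j. i \<le> j \<and> j < length \<sigma> \<and> sat \<sigma> j \<phi>)"
| "sat \<sigma> i (Glob \<phi>) = (\<forall>j. i \<le> j \<and> j < length \<sigma> \<longrightarrow> sat \<sigma> j \<phi>)"

fun fsize :: "'ap ltl \<Rightarrow> nat" where
  "fsize (Prop p) = 1"
| "fsize (NProp p) = 1"
| "fsize (Or \<phi> \<psi>) = fsize \<phi> + fsize \<psi> + 1"
| "fsize (And \<phi> \<psi>) = fsize \<phi> + fsize \<psi> + 1"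
| "fsize (Next \<phi>) = fsize \<phi> + 1"
| "fsize (WNext \<phi>) = fsize \<phi> + 1"
| "fsize (Fut \<phi>) = fsize \<phi> + 1"
| "fsize (Glob \<phi>) = fsize \<phi> + 1"

definition models :: "'ap set list set \<Rightarrow> 'ap ltl \<Rightarrow> bool" where
  "models C \<phi> = (\<forall>\<sigma>\<in>C. sat \<sigma> 0 \<phi>)"

definition refutes :: "'ap set list set \<Rightarrow> 'ap ltl \<Rightarrow> bool" where
  "refutes C \<phi> = (\<forall>\<sigma>\<in>C. \<not> sat \<sigma> 0 \<phi>)"

definition separates :: "'ap ltl \<Rightarrow> 'ap set list set \<Rightarrow> 'ap set list set \<Rightarrow> bool" where
  "separates \<phi> A B = (models A \<phi> \<and> refutes B \<phi>)"

definition is_literal :: "'ap ltl \<Rightarrow> bool" where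
  "is_literal \<alpha> = (\<exists>p. \<alpha> = Prop p \<or> \<alpha> = NProp p)"

definition nextset :: "'ap set list set \<Rightarrow> 'ap set list set" where
  "nextset A = {drop 1 \<sigma> | \<sigma>. \<sigma> \<in> A \<and> 2 \<le> length \<sigma>}"

definition globset :: "'ap set list set \<Rightarrow> 'ap set list set" where
  "globset A = {drop j \<sigma> | \<sigma> j. \<sigma> \<in> A \<and> j < length \<sigma>}"

definition future_point :: "'ap set list set \<Rightarrow> ('ap set list \<Rightarrow> nat) \<Rightarrow> bool" where
  "future_point A f = (\<forall>\<sigma>\<in>A. f \<sigma> < length \<sigma>)"

definition fset_at :: "'ap set list set \<Rightarrow> ('ap set list \<Rightarrow> nat) \<Rightarrow> 'ap set list set" where
  "fset_at A f = {drop (f \<sigma>) \<sigma> | \<sigma>. \<sigma> \<in> A}"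

(* The side condition |A^X| = |A| of Next (resp. |B^X| = |B| of WeakNext) is read as
   "no word is lost when passing to A^X", i.e. every word of A has length >= 2. *)
inductive deduct :: "'ap set list set \<Rightarrow> 'ap set list set \<Rightarrow> nat \<Rightarrow> bool" where
  atomic: "is_literal \<alpha> \<Longrightarrow> models A \<alpha> \<Longrightarrow> refutes B \<alpha> \<Longrightarrow> deduct A B 1"
| or_rule: "deduct A1 B n1 \<Longrightarrow> deduct A2 B n2 \<Longrightarrow> A1 \<inter> A2 = {}
            \<Longrightarrow> deduct (A1 \<union> A2) B (n1 + n2 + 1)"
| and_rule: "deduct A B1 n1 \<Longrightarrow> deduct A B2 n2 \<Longrightarrow> B1 \<inter> B2 = {}
            \<Longrightarrow> deduct A (B1 \<union> B2) (n1 + n2 + 1)"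
| next_rule: "deduct (nextset A) (nextset B) n \<Longrightarrow> \<forall>\<sigma>\<in>A. 2 \<le> length \<sigma>
            \<Longrightarrow> deduct A B (n + 1)"
| wnext_rule: "deduct (nextset A) (nextset B) n \<Longrightarrow> \<forall>\<sigma>\<in>B. 2 \<le> length \<sigma>
            \<Longrightarrow> deduct A B (n + 1)"
| future_rule: "future_point A f \<Longrightarrow> deduct (fset_at A f) (globset B) n
            \<Longrightarrow> deduct A B (n + 1)"
| globally_rule: "future_point B f \<Longrightarrow> deduct (globset A) (fset_at B f) n
            \<Longrightarrow> deduct A B (n + 1)"

end

theory Submission
  imports Defs
begin

lemma sat_drop:
  "j \<le> length \<sigma> \<Longrightarrow> sat (drop j \<sigma>) i \<phi> = sat \<sigma> (i + j) \<phi>"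
proof (induction \<phi> arbitrary: i)
  case (Fut \<phi>)
  show ?case
  proof
    assume "sat (drop j \<sigma>) i (Fut \<phi>)"
    then obtain j' where "i \<le> j'" "j' < length \<sigma> - j" "sat (drop j \<sigma>) j' \<phi>" by auto
    then show "sat \<sigma> (i + j) (Fut \<phi>)" using Fut by (auto intro!: exI[of _ "j' + j"])
  next
    assume "sat \<sigma> (i + j) (Fut \<phi>)"
    then obtain j' where "i + j \<le> j'" "j' < length \<sigma>" "sat \<sigma> j' \<phi>" by auto
    then show "sat (drop j \<sigma>) i (Fut \<phi>)" using Fut
      by (auto intro!: exI[of _ "j' - j"])
  qed
next
  case (Glob \<phi>)
  show ?case
  proof
    assume H: "sat (drop j \<sigma>) i (Glob \<phi>)"
    show "sat \<sigma> (i + j) (Glob \<phi>)"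
    proof (simp, intro allI impI)
      fix j' assume "i + j \<le> j' \<and> j' < length \<sigma>"
      then have a: "i \<le> j' - j \<and> j' - j < length \<sigma> - j \<and> j' - j + j = j'" by auto
      have "sat (drop j \<sigma>) (j' - j) \<phi>" using H a by simp
      then show "sat \<sigma> j' \<phi>" using Glob.IH[of "j' - j"] Glob.prems a by auto
    qed
  next
    assume H: "sat \<sigma> (i + j) (Glob \<phi>)"
    show "sat (drop j \<sigma>) i (Glob \<phi>)"
    proof (simp, intro allI impI)
      fix j' assume "i \<le> j' \<and> j' < length \<sigma> - j"
      then show "sat (drop j \<sigma>) j' \<phi>" using H Glob.IH[of j'] Glob.prems by auto
    qed
  qed
qed (auto simp: nth_drop add.commute)

lemma sat_drop0: "j \<le> length \<sigma> \<Longrightarrow> sat (drop j \<sigma>) 0 \<phi> = sat \<sigma> j \<phi>"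
  using sat_drop[of j \<sigma> 0] by simp

lemma main:
  "A \<subseteq> {\<sigma>. \<sigma> \<noteq> []} \<Longrightarrow> B \<subseteq> {\<sigma>. \<sigma> \<noteq> []} \<Longrightarrow> separates \<phi> A B
   \<Longrightarrow> deduct A B (fsize \<phi>)"
proof (induction \<phi> arbitrary: A B)
  case (Prop p)
  then show ?case using deduct.atomic[of "Prop p" A B] by (auto simp: is_literal_def separates_def)
next
  case (NProp p)
  then show ?case using deduct.atomic[of "NProp p" A B] by (auto simp: is_literal_def separates_def)
next
  case (Or \<phi>1 \<phi>2)
  define A1 where "A1 = {\<sigma>\<in>A. sat \<sigma> 0 \<phi>1}"
  define A2 where "A2 = {\<sigma>\<in>A. \<not> sat \<sigma> 0 \<phi>1}"
  have "deduct A1 B (fsize \<phi>1)" using Or by (intro Or.IH(1)) (auto simp: A1_def separates_def models_def refutes_def)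
  moreover have "deduct A2 B (fsize \<phi>2)" using Or by (intro Or.IH(2)) (auto simp: A2_def separates_def models_def refutes_def)
  ultimately have "deduct (A1 \<union> A2) B (fsize \<phi>1 + fsize \<phi>2 + 1)"
    by (rule deduct.or_rule) (auto simp: A1_def A2_def)
  moreover have "A1 \<union> A2 = A" by (auto simp: A1_def A2_def)
  ultimately show ?case by simp
next
  case (And \<phi>1 \<phi>2)
  define B1 where "B1 = {\<sigma>\<in>B. \<not> sat \<sigma> 0 \<phi>1}"
  define B2 where "B2 = {\<sigma>\<in>B. sat \<sigma> 0 \<phi>1}"
  have "deduct A B1 (fsize \<phi>1)" using And by (intro And.IH(1)) (auto simp: B1_def separates_def models_def refutes_def)
  moreover have "deduct A B2 (fsize \<phi>2)" using And by (intro And.IH(2)) (auto simp: B2_def separates_def models_def refutes_def)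
  ultimately have "deduct A (B1 \<union> B2) (fsize \<phi>1 + fsize \<phi>2 + 1)"
    by (rule deduct.and_rule) (auto simp: B1_def B2_def)
  moreover have "B1 \<union> B2 = B" by (auto simp: B1_def B2_def)
  ultimately show ?case by simp
next
  case (Next \<phi>)
  have len: "\<forall>\<sigma>\<in>A. 2 \<le> length \<sigma>" using Next.prems by (auto simp: separates_def models_def)
  have "deduct (nextset A) (nextset B) (fsize \<phi>)"
  proof (rule Next.IH)
    show "nextset A \<subseteq> {\<sigma>. \<sigma> \<noteq> []}" "nextset B \<subseteq> {\<sigma>. \<sigma> \<noteq> []}" by (auto simp: nextset_def)
    show "separates \<phi> (nextset A) (nextset B)"
      using Next.prems by (auto simp: nextset_def separates_def models_def refutes_def sat_drop0)
  qed
  then show ?case using deduct.next_rule len by simp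
next
  case (WNext \<phi>)
  have len: "\<forall>\<sigma>\<in>B. 2 \<le> length \<sigma>"
  proof
    fix \<sigma> assume s: "\<sigma> \<in> B"
    then have "\<not> sat \<sigma> 0 (WNext \<phi>)" using WNext.prems by (auto simp: separates_def refutes_def)
    then have "length \<sigma> \<noteq> 1" by auto
    moreover have "length \<sigma> \<noteq> 0" using s WNext.prems by auto
    ultimately show "2 \<le> length \<sigma>" by linarith
  qed
  have "deduct (nextset A) (nextset B) (fsize \<phi>)"
  proof (rule WNext.IH)
    show "nextset A \<subseteq> {\<sigma>. \<sigma> \<noteq> []}" "nextset B \<subseteq> {\<sigma>. \<sigma> \<noteq> []}" by (auto simp: nextset_def)
    show "separates \<phi> (nextset A) (nextset B)"
      using WNext.prems by (auto simp: nextset_def separates_def models_def refutes_def sat_drop0)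
  qed
  then show ?case using deduct.wnext_rule len by simp
next
  case (Fut \<phi>)
  define f where "f = (\<lambda>\<sigma>. SOME j. j < length \<sigma> \<and> sat \<sigma> j \<phi>)"
  have fp: "f \<sigma> < length \<sigma> \<and> sat \<sigma> (f \<sigma>) \<phi>" if "\<sigma> \<in> A" for \<sigma>
  proof -
    have "\<exists>j. j < length \<sigma> \<and> sat \<sigma> j \<phi>" using Fut.prems that by (auto simp: separates_def models_def)
    then show ?thesis unfolding f_def by (rule someI_ex)
  qed
  have "deduct (fset_at A f) (globset B) (fsize \<phi>)"
  proof (rule Fut.IH)
    show "fset_at A f \<subseteq> {\<sigma>. \<sigma> \<noteq> []}" using fp by (force simp: fset_at_def)
    show "globset B \<subseteq> {\<sigma>. \<sigma> \<noteq> []}" by (auto simp: globset_def)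
    show "separates \<phi> (fset_at A f) (globset B)"
      using Fut.prems fp by (auto simp: fset_at_def globset_def separates_def models_def refutes_def sat_drop0 less_imp_le)
  qed
  moreover have "future_point A f" using fp by (auto simp: future_point_def)
  ultimately show ?case using deduct.future_rule by simp
next
  case (Glob \<phi>)
  define f where "f = (\<lambda>\<sigma>. SOME j. j < length \<sigma> \<and> \<not> sat \<sigma> j \<phi>)"
  have fp: "f \<sigma> < length \<sigma> \<and> \<not> sat \<sigma> (f \<sigma>) \<phi>" if "\<sigma> \<in> B" for \<sigma>
  proof -
    have "\<exists>j. j < length \<sigma> \<and> \<not> sat \<sigma> j \<phi>" using Glob.prems that by (auto simp: separates_def refutes_def)
    then show ?thesis unfolding f_def by (rule someI_ex)
  qed
  have "deduct (globset A) (fset_at B f) (fsize \<phi>)"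
  proof (rule Glob.IH)
    show "fset_at B f \<subseteq> {\<sigma>. \<sigma> \<noteq> []}" using fp by (force simp: fset_at_def)
    show "globset A \<subseteq> {\<sigma>. \<sigma> \<noteq> []}" by (auto simp: globset_def)
    show "separates \<phi> (globset A) (fset_at B f)"
      using Glob.prems fp by (auto simp: fset_at_def globset_def separates_def models_def refutes_def sat_drop0 less_imp_le)
  qed
  moreover have "future_point B f" using fp by (auto simp: future_point_def)
  ultimately show ?case using deduct.globally_rule by simp
qed

theorem corollary2:
  fixes \<phi> :: "('ap::finite) ltl" and k :: nat and A B :: "'ap set list set"
  assumes "A \<subseteq> {\<sigma>. \<sigma> \<noteq> []}" and "B \<subseteq> {\<sigma>. \<sigma> \<noteq> []}"
    and "separates \<phi> A B"
    and "\<forall>n. deduct A B n \<longrightarrow> k \<le> n"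
  shows "k \<le> fsize \<phi>"
  using main[OF assms(1-3)] assms(4) by blast

end
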